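(* Let $N\ge1$ and $\eta\in[0,1]$. For bit strings $l_y\in\{0,1\}^N$ with $l_y^1=0$, $y=1,\dots,2^{N-1}$, consider the quantum functional $$(\mathcal B_N)_Q=\eta\sum_{y=1}^{2^{N-1}}\Big|\sum_{x=1}^N(-1)^{l_y^x}\,\mathrm{Tr}\big[\rho_{AB}\,(A_x\otimes B_y)\big]\Big|,$$ where $\rho_{AB}$ is a density operator on $\mathcal H_A\otimes\mathcal H_B$ (finite-dimensional Hilbert spaces of arbitrary dimension) and $A_x$, $B_y$ are self-adjoint operators with $A_x^2=\mathbb I$, $B_y^2=\mathbb I$. Then the supremum of $(\mathcal B_N)_Q$ over all such states and observables equals $\eta\,2^{N-1}\sqrt N$, and this value is attained when $A_1,\dots,A_N$ pairwise anticommute, i.e. $A_xA_{x'}+A_{x'}A_x=2\delta_{x,x'}\mathbb I$.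
   Context: Alice's unsharp measurements are the POVMs $\{E_{\pm|x}=\tfrac12(\mathbb I\pm\eta A_x)\}$, so that the effective observable is $\eta A_x$; $\eta$ is the unsharpness parameter. *)

theory Defs
  imports Complex_Main "Jordan_Normal_Form.Matrix"
begin

definition mtrace :: "complex mat \<Rightarrow> complex" where
  "mtrace M = (\<Sum>i<dim_row M. M $$ (i, i))"

definition kron :: "complex mat \<Rightarrow> complex mat \<Rightarrow> complex mat" where
  "kron M K = mat (dim_row M * dim_row K) (dim_col M * dim_col K)
     (\<lambda>(i, j). M $$ (i div dim_row K, j div dim_col K) * K $$ (i mod dim_row K, j mod dim_col K))"

definition hermitian_mat :: "nat \<Rightarrow> complex mat \<Rightarrow> bool" where
  "hermitian_mat d M \<longleftrightarrow> M \<in> carrier_mat d d \<and>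
     (\<forall>i<d. \<forall>j<d. M $$ (i, j) = cnj (M $$ (j, i)))"

definition psd_mat :: "nat \<Rightarrow> complex mat \<Rightarrow> bool" where
  "psd_mat d M \<longleftrightarrow> hermitian_mat d M \<and>
     (\<forall>v \<in> carrier_vec d. 0 \<le> Re (\<Sum>i<d. \<Sum>j<d. cnj (v $ i) * M $$ (i, j) * v $ j))"

definition density_mat :: "nat \<Rightarrow> complex mat \<Rightarrow> bool" where
  "density_mat d \<rho> \<longleftrightarrow> psd_mat d \<rho> \<and> mtrace \<rho> = 1"

definition observable :: "nat \<Rightarrow> complex mat \<Rightarrow> bool" where
  "observable d M \<longleftrightarrow> hermitian_mat d M \<and> M * M = 1\<^sub>m d"

(* Alice's settings x = 1..N are indexed by x \<in> {0..<N}.  Bob's settings y are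
   indexed by the bit strings l_y themselves: a string l \<in> {0,1}^N with l^1 = 0
   is represented by the set S \<subseteq> {1..<N} of positions carrying bit 1. *)
definition bob_strings :: "nat \<Rightarrow> nat set set" where
  "bob_strings N = Pow {1..<N}"

definition valid_setup :: "nat \<Rightarrow> nat \<Rightarrow> nat \<Rightarrow> complex mat \<Rightarrow> (nat \<Rightarrow> complex mat)
     \<Rightarrow> (nat set \<Rightarrow> complex mat) \<Rightarrow> bool" where
  "valid_setup N dA dB \<rho> A B \<longleftrightarrow>
     density_mat (dA * dB) \<rho> \<and> (\<forall>x<N. observable dA (A x)) \<and>
     (\<forall>S \<in> bob_strings N. observable dB (B S))"

definition BN_Q :: "nat \<Rightarrow> real \<Rightarrow> complex mat \<Rightarrow> (nat \<Rightarrow> complex mat)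
     \<Rightarrow> (nat set \<Rightarrow> complex mat) \<Rightarrow> real" where
  "BN_Q N \<eta> \<rho> A B = \<eta> * (\<Sum>S \<in> bob_strings N.
      cmod (\<Sum>x<N. (if x \<in> S then -1 else 1) * mtrace (\<rho> * kron (A x) (B S))))"

end

theory Submission
  imports Defs
begin


lemma sum_pair_idx:
  fixes f :: "nat \<Rightarrow> 'a::comm_monoid_add"
  shows "(\<Sum>k<n*m. f k) = (\<Sum>a<n. \<Sum>b<m. f (a*m+b))"
proof (induction n)
  case 0 then show ?case by simp
next
  case (Suc n)
  have "{..<Suc n * m} = {..<n*m} \<union> {n*m..<n*m+m}" by auto
  then have "(\<Sum>k<Suc n*m. f k) = (\<Sum>k<n*m. f k) + (\<Sum>k\<in>{n*m..<n*m+m}. f k)"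
    by (simp add: sum.union_disjoint ivl_disj_int)
  also have "(\<Sum>k\<in>{n*m..<n*m+m}. f k) = (\<Sum>b<m. f (n*m+b))"
  proof -
    have "(\<Sum>k\<in>{n*m..<n*m+m}. f k) = (\<Sum>b\<in>{0..<m}. f (b + n*m))"
      using sum.shift_bounds_nat_ivl[of f 0 "n*m" m] by (simp add: add.commute)
    then show ?thesis by (simp add: lessThan_atLeast0 add.commute)
  qed
  finally show ?case using Suc by simp
qed

lemma sum_pair_idx':
  fixes f :: "nat \<Rightarrow> nat \<Rightarrow> 'a::comm_monoid_add"
  shows "(\<Sum>k<n*m. f (k div m) (k mod m)) = (\<Sum>a<n. \<Sum>b<m. f a b)"
  unfolding sum_pair_idx[of "\<lambda>k. f (k div m) (k mod m)"]
  by (intro sum.cong refl) auto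

lemma kron_dims[simp]: "dim_row (kron M K) = dim_row M * dim_row K"
  "dim_col (kron M K) = dim_col M * dim_col K"
  by (simp_all add: kron_def)

lemma kron_index[simp]: "i < dim_row M * dim_row K \<Longrightarrow> j < dim_col M * dim_col K \<Longrightarrow>
  kron M K $$ (i,j) = M $$ (i div dim_row K, j div dim_col K) * K $$ (i mod dim_row K, j mod dim_col K)"
  by (simp add: kron_def)

lemma kron_carrier: "M \<in> carrier_mat n n \<Longrightarrow> K \<in> carrier_mat m m \<Longrightarrow> kron M K \<in> carrier_mat (n*m) (n*m)"
  by (rule carrier_matI) (auto dest: carrier_matD)

lemma divmod_lt: "(i::nat) < n*m \<Longrightarrow> i div m < n" "(i::nat) < n*m \<Longrightarrow> i mod m < m"
proof -
  assume "i < n*m"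
  then show "i div m < n" by (metis less_mult_imp_div_less)
next
  assume "i < n*m"
  then have "m > 0" by (cases m) auto
  then show "i mod m < m" by simp
qed

lemma kron_mult:
  assumes "A \<in> carrier_mat n n" "C \<in> carrier_mat n n" "B \<in> carrier_mat m m" "D \<in> carrier_mat m m"
  shows "kron A B * kron C D = kron (A*C) (B*D)"
proof (rule eq_matI)
  fix i j assume i: "i < dim_row (kron (A*C) (B*D))" and j: "j < dim_col (kron (A*C) (B*D))"
  then have i': "i < n*m" and j': "j < n*m" using assms by auto
  have "(kron A B * kron C D) $$ (i,j) = (\<Sum>k<n*m. kron A B $$ (i,k) * kron C D $$ (k,j))"
    using assms i' j' by (simp add: scalar_prod_def lessThan_atLeast0)
  also have "\<dots> = (\<Sum>k<n*m. (A $$ (i div m, k div m) * B $$ (i mod m, k mod m)) *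
       (C $$ (k div m, j div m) * D $$ (k mod m, j mod m)))"
    using assms i' j' by (intro sum.cong) auto
  also have "\<dots> = (\<Sum>a<n. \<Sum>b<m. (A $$ (i div m, a) * B $$ (i mod m, b)) *
       (C $$ (a, j div m) * D $$ (b, j mod m)))"
    by (rule sum_pair_idx')
  also have "\<dots> = (\<Sum>a<n. A $$ (i div m, a) * C $$ (a, j div m)) * (\<Sum>b<m. B $$ (i mod m, b) * D $$ (b, j mod m))"
    unfolding sum_product by (intro sum.cong refl) (simp add: mult_ac)
  also have "\<dots> = kron (A*C) (B*D) $$ (i,j)"
    using assms i' j' divmod_lt[OF i'] divmod_lt[OF j'] by (simp add: scalar_prod_def lessThan_atLeast0)
  finally show "(kron A B * kron C D) $$ (i,j) = kron (A*C) (B*D) $$ (i,j)" .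
qed (use assms in auto)

lemma index_mult_sum:
  assumes "(P::complex mat) \<in> carrier_mat n k" "Q \<in> carrier_mat k m" "i < n" "j < m"
  shows "(P * Q) $$ (i, j) = (\<Sum>l<k. P $$ (i, l) * Q $$ (l, j))"
  using carrier_matD[OF assms(1)] carrier_matD[OF assms(2)] assms(3,4)
  apply (subst index_mult_mat)
  apply simp
  apply simp
  apply (simp add: scalar_prod_def atLeast0LessThan)
  done


lemma mtrace_mult:
  assumes "P \<in> carrier_mat D D" "Q \<in> carrier_mat D D"
  shows "mtrace (P * Q) = (\<Sum>i<D. \<Sum>j<D. P $$ (i,j) * Q $$ (j,i))"
  unfolding mtrace_def 
  apply (intro sum.cong)
  using assms apply simp
  apply (subst index_mult_sum[OF assms])
  using assms apply simp_all
  done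

lemma mtrace_kron:
  assumes "\<rho> \<in> carrier_mat (n*m) (n*m)" "Y \<in> carrier_mat n n" "K \<in> carrier_mat m m"
  shows "mtrace (\<rho> * kron Y K) = (\<Sum>i<n*m. \<Sum>j<n*m. \<rho> $$ (i,j) *
            (Y $$ (j div m, i div m) * K $$ (j mod m, i mod m)))"
proof -
  have "mtrace (\<rho> * kron Y K) = (\<Sum>i<n*m. \<Sum>j<n*m. \<rho> $$ (i,j) * kron Y K $$ (j,i))"
    using assms kron_carrier[OF assms(2,3)] by (intro mtrace_mult) auto
  also have "\<dots> = (\<Sum>i<n*m. \<Sum>j<n*m. \<rho> $$ (i,j) *
            (Y $$ (j div m, i div m) * K $$ (j mod m, i mod m)))"
    using assms by (intro sum.cong refl) auto
  finally show ?thesis .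
qed

lemma mtrace_kron_lin:
  assumes "\<rho> \<in> carrier_mat (n*m) (n*m)" "\<And>s. s \<in> I \<Longrightarrow> Y s \<in> carrier_mat n n" "K \<in> carrier_mat m m"
  shows "(\<Sum>s\<in>I. c s * mtrace (\<rho> * kron (Y s) K)) =
     mtrace (\<rho> * kron (mat n n (\<lambda>(a,b). \<Sum>s\<in>I. c s * Y s $$ (a,b))) K)"
proof -
  have "(\<Sum>s\<in>I. c s * mtrace (\<rho> * kron (Y s) K)) = (\<Sum>s\<in>I. c s * (\<Sum>i<n*m. \<Sum>j<n*m. \<rho> $$ (i,j) *
            (Y s $$ (j div m, i div m) * K $$ (j mod m, i mod m))))"
    using assms by (intro sum.cong refl) (simp add: mtrace_kron)
  also have "\<dots> = (\<Sum>i<n*m. \<Sum>j<n*m. \<rho> $$ (i,j) *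
            ((\<Sum>s\<in>I. c s * Y s $$ (j div m, i div m)) * K $$ (j mod m, i mod m)))"
    by (simp add: sum_distrib_left sum_distrib_right mult_ac sum.swap[of _ I])
  also have "\<dots> = mtrace (\<rho> * kron (mat n n (\<lambda>(a,b). \<Sum>s\<in>I. c s * Y s $$ (a,b))) K)"
    using assms divmod_lt by (subst mtrace_kron) (auto intro!: sum.cong)
  finally show ?thesis .
qed

lemma mtrace_add:
  assumes "\<rho> \<in> carrier_mat D D" "P \<in> carrier_mat D D" "Q \<in> carrier_mat D D"
  shows "mtrace (\<rho> * (P + Q)) = mtrace (\<rho> * P) + mtrace (\<rho> * Q)"
proof -
  have "mtrace (\<rho> * (P + Q)) = (\<Sum>i<D. \<Sum>j<D. \<rho> $$ (i,j) * (P+Q) $$ (j,i))"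
    using assms by (intro mtrace_mult) auto
  also have "\<dots> = (\<Sum>i<D. \<Sum>j<D. \<rho> $$ (i,j) * P $$ (j,i)) + (\<Sum>i<D. \<Sum>j<D. \<rho> $$ (i,j) * Q $$ (j,i))"
    using assms by (simp add: algebra_simps sum.distrib)
  finally show ?thesis using assms by (simp add: mtrace_mult)
qed

lemma mtrace_smult:
  assumes "\<rho> \<in> carrier_mat D D" "P \<in> carrier_mat D D"
  shows "mtrace (\<rho> * (c \<cdot>\<^sub>m P)) = c * mtrace (\<rho> * P)"
  using assms by (simp add: mtrace_mult sum_distrib_left mult_ac)

lemma mtrace_one:
  assumes "\<rho> \<in> carrier_mat D D"
  shows "mtrace (\<rho> * 1\<^sub>m D) = mtrace \<rho>"
  using assms by simp

lemma kron_one: "kron (1\<^sub>m n) (1\<^sub>m m) = 1\<^sub>m (n*m)"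
proof (rule eq_matI)
  fix i j assume "i < dim_row (1\<^sub>m (n * m) :: complex mat)" "j < dim_col (1\<^sub>m (n * m) :: complex mat)"
  then have i: "i < n*m" and j: "j < n*m" by auto
  have "(i div m = j div m \<and> i mod m = j mod m) = (i = j)"
    by (metis div_mult_mod_eq)
  then show "kron (1\<^sub>m n) (1\<^sub>m m) $$ (i, j) = 1\<^sub>m (n * m) $$ (i, j)"
    using i j divmod_lt[OF i] divmod_lt[OF j] by auto
qed auto

lemma psd_trace:
  assumes "psd_mat D \<rho>" "hermitian_mat D M"
  shows "0 \<le> Re (mtrace (\<rho> * (M * M)))"
proof -
  have r: "\<rho> \<in> carrier_mat D D" and m: "M \<in> carrier_mat D D"
    using assms by (auto simp: psd_mat_def hermitian_mat_def)
  have "mtrace (\<rho> * (M * M)) = (\<Sum>i<D. \<Sum>j<D. \<rho> $$ (i,j) * (M*M) $$ (j,i))"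
    using r m by (intro mtrace_mult) auto
  also have "\<dots> = (\<Sum>i<D. \<Sum>j<D. \<Sum>k<D. \<rho> $$ (i,j) * (M $$ (j,k) * M $$ (k,i)))"
    apply (intro sum.cong refl)
    apply (subst index_mult_sum[OF m m])
    apply (simp_all add: sum_distrib_left)
    done
  also have "\<dots> = (\<Sum>k<D. \<Sum>i<D. \<Sum>j<D. cnj (cnj (M $$ (k,i))) * \<rho> $$ (i,j) * cnj (M $$ (k,j)))"
  proof -
    have "\<And>i j k. i < D \<Longrightarrow> j < D \<Longrightarrow> k < D \<Longrightarrow> \<rho> $$ (i,j) * (M $$ (j,k) * M $$ (k,i)) =
       cnj (cnj (M $$ (k,i))) * \<rho> $$ (i,j) * cnj (M $$ (k,j))"
    proof -
      fix i j k assume "i < D" "j < D" "k < D"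
      then have "M $$ (j,k) = cnj (M $$ (k,j))" using assms(2) unfolding hermitian_mat_def by blast
      then show "\<rho> $$ (i,j) * (M $$ (j,k) * M $$ (k,i)) =
       cnj (cnj (M $$ (k,i))) * \<rho> $$ (i,j) * cnj (M $$ (k,j))" by (simp add: mult_ac)
    qed
    then have "(\<Sum>i<D. \<Sum>j<D. \<Sum>k<D. \<rho> $$ (i,j) * (M $$ (j,k) * M $$ (k,i))) =
        (\<Sum>i<D. \<Sum>j<D. \<Sum>k<D. cnj (cnj (M $$ (k,i))) * \<rho> $$ (i,j) * cnj (M $$ (k,j)))"
      by (intro sum.cong refl) auto
    also have "\<dots> = (\<Sum>i<D. \<Sum>k<D. \<Sum>j<D. cnj (cnj (M $$ (k,i))) * \<rho> $$ (i,j) * cnj (M $$ (k,j)))"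
      by (rule sum.cong[OF refl], rule sum.swap)
    also have "\<dots> = (\<Sum>k<D. \<Sum>i<D. \<Sum>j<D. cnj (cnj (M $$ (k,i))) * \<rho> $$ (i,j) * cnj (M $$ (k,j)))"
      by (rule sum.swap)
    finally show ?thesis .
  qed
  finally have eq: "Re (mtrace (\<rho> * (M * M))) = (\<Sum>k<D. Re (\<Sum>i<D. \<Sum>j<D. cnj (cnj (M $$ (k,i))) * \<rho> $$ (i,j) * cnj (M $$ (k,j))))"
    by simp
  have "\<And>k. 0 \<le> Re (\<Sum>i<D. \<Sum>j<D. cnj (cnj (M $$ (k,i))) * \<rho> $$ (i,j) * cnj (M $$ (k,j)))"
  proof -
    fix k
    let ?v = "vec D (\<lambda>i. cnj (M $$ (k,i)))"
    have "?v \<in> carrier_vec D" by simp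
    then have "0 \<le> Re (\<Sum>i<D. \<Sum>j<D. cnj (?v $ i) * \<rho> $$ (i, j) * ?v $ j)"
      using assms(1) unfolding psd_mat_def by blast
    moreover have "(\<Sum>i<D. \<Sum>j<D. cnj (?v $ i) * \<rho> $$ (i, j) * ?v $ j) =
        (\<Sum>i<D. \<Sum>j<D. cnj (cnj (M $$ (k,i))) * \<rho> $$ (i,j) * cnj (M $$ (k,j)))"
      by (intro sum.cong refl) auto
    ultimately show "0 \<le> Re (\<Sum>i<D. \<Sum>j<D. cnj (cnj (M $$ (k,i))) * \<rho> $$ (i,j) * cnj (M $$ (k,j)))" by simp
  qed
  then show ?thesis unfolding eq by (intro sum_nonneg) auto
qed

lemma herm_trace_real:
  assumes "hermitian_mat D \<rho>" "hermitian_mat D H"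
  shows "Im (mtrace (\<rho> * H)) = 0"
proof -
  have r: "\<rho> \<in> carrier_mat D D" and h: "H \<in> carrier_mat D D"
    using assms by (auto simp: hermitian_mat_def)
  let ?t = "mtrace (\<rho> * H)"
  have t: "?t = (\<Sum>i<D. \<Sum>j<D. \<rho> $$ (i,j) * H $$ (j,i))" using r h by (rule mtrace_mult)
  have "cnj ?t = (\<Sum>i<D. \<Sum>j<D. cnj (\<rho> $$ (i,j)) * cnj (H $$ (j,i)))" unfolding t by (simp only: cnj_sum complex_cnj_mult)
  also have "\<dots> = (\<Sum>i<D. \<Sum>j<D. \<rho> $$ (j,i) * H $$ (i,j))"
  proof (intro sum.cong refl)
    fix i j assume "i \<in> {..<D}" "j \<in> {..<D}"
    then have "\<rho> $$ (j,i) = cnj (\<rho> $$ (i,j))" "H $$ (i,j) = cnj (H $$ (j,i))"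
      using assms unfolding hermitian_mat_def lessThan_iff by blast+
    then show "cnj (\<rho> $$ (i,j)) * cnj (H $$ (j,i)) = \<rho> $$ (j,i) * H $$ (i,j)" by simp
  qed
  also have "\<dots> = ?t" unfolding t by (subst sum.swap) (simp add: mult_ac)
  finally have "cnj ?t = ?t" .
  then show ?thesis by (metis Reals_cnj_iff complex_is_Real_iff)
qed

lemma herm_kron:
  assumes "hermitian_mat n X" "hermitian_mat m K"
  shows "hermitian_mat (n*m) (kron X K)"
proof -
  have c: "X \<in> carrier_mat n n" "K \<in> carrier_mat m m" using assms unfolding hermitian_mat_def by auto
  have "kron X K $$ (i, j) = cnj (kron X K $$ (j, i))" if "i < n*m" "j < n*m" for i j
  proof -
    have "X $$ (i div m, j div m) = cnj (X $$ (j div m, i div m))"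
      using assms(1) divmod_lt that unfolding hermitian_mat_def by blast
    moreover have "K $$ (i mod m, j mod m) = cnj (K $$ (j mod m, i mod m))"
      using assms(2) divmod_lt that unfolding hermitian_mat_def by blast
    ultimately show ?thesis using c that by simp
  qed
  then show ?thesis unfolding hermitian_mat_def using kron_carrier[OF c] by blast
qed

lemma herm_add:
  assumes "hermitian_mat n X" "hermitian_mat n K"
  shows "hermitian_mat n (X + K)"
proof -
  have c: "X \<in> carrier_mat n n" "K \<in> carrier_mat n n" using assms unfolding hermitian_mat_def by auto
  have "(X + K) $$ (i, j) = cnj ((X + K) $$ (j, i))" if "i < n" "j < n" for i j
  proof -
    have "X $$ (i, j) = cnj (X $$ (j, i))" "K $$ (i, j) = cnj (K $$ (j, i))"
      using assms that unfolding hermitian_mat_def by blast+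
    then show ?thesis using c that by simp
  qed
  then show ?thesis unfolding hermitian_mat_def using add_carrier_mat[OF c(2), of X] by blast
qed

lemma herm_smult:
  assumes "hermitian_mat n X" "cnj c = c"
  shows "hermitian_mat n (c \<cdot>\<^sub>m X)"
proof -
  have c: "X \<in> carrier_mat n n" using assms unfolding hermitian_mat_def by auto
  have "(c \<cdot>\<^sub>m X) $$ (i, j) = cnj ((c \<cdot>\<^sub>m X) $$ (j, i))" if "i < n" "j < n" for i j
  proof -
    have "X $$ (i, j) = cnj (X $$ (j, i))"
      using assms that unfolding hermitian_mat_def by blast+
    then show ?thesis using c that assms(2) by simp
  qed
  then show ?thesis unfolding hermitian_mat_def using c by simp
qed

lemma herm_one: "hermitian_mat n (1\<^sub>m n)"
  unfolding hermitian_mat_def by auto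



lemma cs_bound:
  assumes rho: "density_mat (n*m) \<rho>" and X: "hermitian_mat n X" and B: "observable m B" and t: "t > 0"
  shows "cmod (mtrace (\<rho> * kron X B)) \<le> Re (mtrace (\<rho> * kron (X*X) (1\<^sub>m m))) / (2*t) + t/2"
proof -
  have psd: "psd_mat (n*m) \<rho>" and tr: "mtrace \<rho> = 1" using rho by (auto simp: density_mat_def)
  have hr: "hermitian_mat (n*m) \<rho>" using psd by (simp add: psd_mat_def)
  have rc: "\<rho> \<in> carrier_mat (n*m) (n*m)" using hr by (simp add: hermitian_mat_def)
  have hB: "hermitian_mat m B" and BB: "B * B = 1\<^sub>m m" using B by (auto simp: observable_def)
  have Xc: "X \<in> carrier_mat n n" using X by (simp add: hermitian_mat_def)
  have Bc: "B \<in> carrier_mat m m" using hB by (simp add: hermitian_mat_def)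
  have 1: "1\<^sub>m n \<in> carrier_mat n n" "1\<^sub>m m \<in> carrier_mat m m" by auto
  define z where "z = mtrace (\<rho> * kron X B)"
  have imz: "Im z = 0" unfolding z_def by (rule herm_trace_real[OF hr herm_kron[OF X hB]])
  define \<sigma> :: real where "\<sigma> = (if Re z \<ge> 0 then 1 else -1)"
  have sz: "\<sigma> * Re z = cmod z" using imz unfolding \<sigma>_def by (simp add: cmod_def)
  define c :: complex where "c = of_real (- t * \<sigma>)"
  define P where "P = kron X (1\<^sub>m m)"
  define Q where "Q = kron (1\<^sub>m n) B"
  have Pc: "P \<in> carrier_mat (n*m) (n*m)" unfolding P_def by (rule kron_carrier[OF Xc 1(2)])
  have Qc: "Q \<in> carrier_mat (n*m) (n*m)" unfolding Q_def by (rule kron_carrier[OF 1(1) Bc])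
  have cQc: "c \<cdot>\<^sub>m Q \<in> carrier_mat (n*m) (n*m)" using Qc by simp
  have hM: "hermitian_mat (n*m) (P + c \<cdot>\<^sub>m Q)"
    unfolding P_def Q_def
    by (intro herm_add herm_smult herm_kron X hB herm_one) (simp add: c_def)
  have PP: "P * P = kron (X*X) (1\<^sub>m m)" unfolding P_def using kron_mult[OF Xc Xc 1(2) 1(2)] by simp
  have PQ: "P * Q = kron X B" unfolding P_def Q_def using kron_mult[OF Xc 1(1) 1(2) Bc] Xc Bc by simp
  have QP: "Q * P = kron X B" unfolding P_def Q_def using kron_mult[OF 1(1) Xc Bc 1(2)] Xc Bc by simp
  have QQ: "Q * Q = 1\<^sub>m (n*m)" unfolding P_def Q_def using kron_mult[OF 1(1) 1(1) Bc Bc] BB by (simp add: kron_one)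
  have MM: "(P + c \<cdot>\<^sub>m Q) * (P + c \<cdot>\<^sub>m Q) =
      P * P + c \<cdot>\<^sub>m (P * Q) + (c \<cdot>\<^sub>m (Q * P) + (c * c) \<cdot>\<^sub>m (Q * Q))"
  proof -
    have "(P + c \<cdot>\<^sub>m Q) * (P + c \<cdot>\<^sub>m Q) = P * (P + c \<cdot>\<^sub>m Q) + (c \<cdot>\<^sub>m Q) * (P + c \<cdot>\<^sub>m Q)"
      by (rule add_mult_distrib_mat[OF Pc cQc, of _ "n*m"]) (use Pc cQc in simp)
    also have "P * (P + c \<cdot>\<^sub>m Q) = P * P + P * (c \<cdot>\<^sub>m Q)"
      by (rule mult_add_distrib_mat[OF Pc Pc cQc])
    also have "(c \<cdot>\<^sub>m Q) * (P + c \<cdot>\<^sub>m Q) = (c \<cdot>\<^sub>m Q) * P + (c \<cdot>\<^sub>m Q) * (c \<cdot>\<^sub>m Q)"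
      by (rule mult_add_distrib_mat[OF cQc Pc cQc])
    also have "P * (c \<cdot>\<^sub>m Q) = c \<cdot>\<^sub>m (P * Q)" by (rule mult_smult_distrib[OF Pc Qc])
    also have "(c \<cdot>\<^sub>m Q) * P = c \<cdot>\<^sub>m (Q * P)" by (rule mult_smult_assoc_mat[OF Qc Pc])
    also have "(c \<cdot>\<^sub>m Q) * (c \<cdot>\<^sub>m Q) = (c * c) \<cdot>\<^sub>m (Q * Q)"
    proof -
      have "(c \<cdot>\<^sub>m Q) * (c \<cdot>\<^sub>m Q) = c \<cdot>\<^sub>m ((c \<cdot>\<^sub>m Q) * Q)" by (rule mult_smult_distrib[OF cQc Qc])
      also have "(c \<cdot>\<^sub>m Q) * Q = c \<cdot>\<^sub>m (Q * Q)" by (rule mult_smult_assoc_mat[OF Qc Qc])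
      also have "c \<cdot>\<^sub>m (c \<cdot>\<^sub>m (Q * Q)) = (c * c) \<cdot>\<^sub>m (Q * Q)" by (intro eq_matI) auto
      finally show ?thesis .
    qed
    finally show ?thesis .
  qed
  have PPc: "P * P \<in> carrier_mat (n*m) (n*m)" using Pc by simp
  have PQc: "P * Q \<in> carrier_mat (n*m) (n*m)" using Pc Qc by simp
  have QPc: "Q * P \<in> carrier_mat (n*m) (n*m)" using Pc Qc by simp
  have QQc: "Q * Q \<in> carrier_mat (n*m) (n*m)" using Qc by simp
  have "mtrace (\<rho> * ((P + c \<cdot>\<^sub>m Q) * (P + c \<cdot>\<^sub>m Q))) =
      mtrace (\<rho> * (P * P)) + (c * mtrace (\<rho> * (P * Q)) + (c * mtrace (\<rho> * (Q * P)) + (c * c) * mtrace (\<rho> * (Q * Q))))"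
    unfolding MM using rc PPc PQc QPc QQc
    by (simp add: mtrace_add mtrace_smult)
  also have "\<dots> = mtrace (\<rho> * kron (X*X) (1\<^sub>m m)) + 2 * c * z + c * c"
    unfolding PP PQ QP QQ z_def using rc tr by (simp add: algebra_simps)
  finally have eq: "mtrace (\<rho> * ((P + c \<cdot>\<^sub>m Q) * (P + c \<cdot>\<^sub>m Q))) = mtrace (\<rho> * kron (X*X) (1\<^sub>m m)) + 2 * c * z + c * c" .
  have "0 \<le> Re (mtrace (\<rho> * ((P + c \<cdot>\<^sub>m Q) * (P + c \<cdot>\<^sub>m Q))))" by (rule psd_trace[OF psd hM])
  then have "0 \<le> Re (mtrace (\<rho> * kron (X*X) (1\<^sub>m m)) + 2 * c * z + c * c)"
    unfolding eq .
  moreover have "Re (mtrace (\<rho> * kron (X*X) (1\<^sub>m m)) + 2 * c * z + c * c) =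
     Re (mtrace (\<rho> * kron (X*X) (1\<^sub>m m))) - 2 * t * (\<sigma> * Re z) + t * t * (\<sigma> * \<sigma>)"
    unfolding c_def by (simp add: algebra_simps)
  ultimately have "0 \<le> Re (mtrace (\<rho> * kron (X*X) (1\<^sub>m m))) - 2 * t * (\<sigma> * Re z) + t * t * (\<sigma> * \<sigma>)"
    by simp
  moreover have "\<sigma> * \<sigma> = 1" unfolding \<sigma>_def by simp
  ultimately have "2 * t * cmod z \<le> Re (mtrace (\<rho> * kron (X*X) (1\<^sub>m m))) + t * t" using sz by simp
  then show ?thesis unfolding z_def[symmetric] using t by (simp add: field_simps)
qed



definition sgn_s :: "nat \<Rightarrow> nat set \<Rightarrow> complex" where
  "sgn_s x S = (if x \<in> S then -1 else 1)"

lemma sgn_s_sq: "sgn_s x S * sgn_s x S = 1" by (simp add: sgn_s_def)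

lemma card_bob: "card (bob_strings N) = 2 ^ (N - 1)"
  by (simp add: bob_strings_def card_Pow)

lemma finite_bob: "finite (bob_strings N)"
  by (simp add: bob_strings_def)

lemma char_zero_aux:
  assumes w: "w \<in> {1..<N}" and vw: "v \<noteq> w"
  shows "(\<Sum>S\<in>bob_strings N. sgn_s w S * sgn_s v S) = 0"
proof -
  define \<phi> where "\<phi> S = (if w \<in> S then S - {w} else insert w S)" for S
  let ?f = "\<lambda>S. sgn_s w S * sgn_s v S"
  have inv: "\<phi> (\<phi> S) = S" for S unfolding \<phi>_def by auto
  have into: "\<phi> S \<in> bob_strings N" if "S \<in> bob_strings N" for S
    using that w unfolding \<phi>_def bob_strings_def by auto
  have bij: "bij_betw \<phi> (bob_strings N) (bob_strings N)"
    by (rule bij_betw_byWitness[where f' = \<phi>]) (use inv into in auto)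
  have neg: "?f (\<phi> S) = - ?f S" for S
    using vw unfolding \<phi>_def sgn_s_def by auto
  have "(\<Sum>S\<in>bob_strings N. ?f S) = (\<Sum>S\<in>bob_strings N. ?f (\<phi> S))"
    using sum.reindex_bij_betw[OF bij, of ?f] by simp
  also have "\<dots> = - (\<Sum>S\<in>bob_strings N. ?f S)" by (simp add: neg sum_negf)
  finally show ?thesis by simp
qed

lemma char_sum:
  assumes "x < N" "y < N"
  shows "(\<Sum>S\<in>bob_strings N. sgn_s x S * sgn_s y S) = (if x = y then 2 ^ (N - 1) else 0)"
proof (cases "x = y")
  case True
  then show ?thesis by (simp add: sgn_s_sq card_bob)
next
  case False
  show ?thesis
  proof (cases "x = 0")
    case True
    then have "y \<in> {1..<N}" using False assms by auto
    then show ?thesis using char_zero_aux[of y N x] False by (simp add: mult.commute)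
  next
    case False
    then have "x \<in> {1..<N}" using assms by auto
    then show ?thesis using char_zero_aux[of x N y] \<open>x \<noteq> y\<close> by simp
  qed
qed

definition Xop :: "nat \<Rightarrow> nat \<Rightarrow> (nat \<Rightarrow> complex mat) \<Rightarrow> nat set \<Rightarrow> complex mat" where
  "Xop N d A S = mat d d (\<lambda>(a,b). \<Sum>x<N. sgn_s x S * A x $$ (a,b))"

lemma Xop_carrier: "Xop N d A S \<in> carrier_mat d d" by (simp add: Xop_def)

lemma Xop_herm:
  assumes "\<And>x. x < N \<Longrightarrow> hermitian_mat d (A x)"
  shows "hermitian_mat d (Xop N d A S)"
proof -
  have "Xop N d A S $$ (a,b) = cnj (Xop N d A S $$ (b,a))" if "a < d" "b < d" for a b
  proof -
    have "\<And>x. x < N \<Longrightarrow> A x $$ (a,b) = cnj (A x $$ (b,a))" using assms that unfolding hermitian_mat_def by blast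
    then show ?thesis using that by (auto simp: Xop_def sgn_s_def cnj_sum intro!: sum.cong)
  qed
  then show ?thesis unfolding hermitian_mat_def using Xop_carrier by blast
qed

lemma Xop_sq_entry:
  assumes "\<And>x. x < N \<Longrightarrow> A x \<in> carrier_mat d d" "a < d" "b < d"
  shows "(Xop N d A S * Xop N d A S) $$ (a,b) =
     (\<Sum>x<N. \<Sum>y<N. sgn_s x S * sgn_s y S * (A x * A y) $$ (a,b))"
proof -
  have "(Xop N d A S * Xop N d A S) $$ (a,b) = (\<Sum>k<d. Xop N d A S $$ (a,k) * Xop N d A S $$ (k,b))"
    using assms by (intro index_mult_sum) (auto simp: Xop_carrier)
  also have "\<dots> = (\<Sum>k<d. (\<Sum>x<N. sgn_s x S * A x $$ (a,k)) * (\<Sum>y<N. sgn_s y S * A y $$ (k,b)))"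
    using assms by (intro sum.cong refl) (simp add: Xop_def)
  also have "\<dots> = (\<Sum>k<d. \<Sum>x<N. \<Sum>y<N. sgn_s x S * sgn_s y S * (A x $$ (a,k) * A y $$ (k,b)))"
    unfolding sum_product by (intro sum.cong refl) (simp add: mult_ac)
  also have "\<dots> = (\<Sum>x<N. \<Sum>y<N. \<Sum>k<d. sgn_s x S * sgn_s y S * (A x $$ (a,k) * A y $$ (k,b)))"
  proof -
    have "(\<Sum>k<d. \<Sum>x<N. \<Sum>y<N. sgn_s x S * sgn_s y S * (A x $$ (a,k) * A y $$ (k,b))) =
       (\<Sum>x<N. \<Sum>k<d. \<Sum>y<N. sgn_s x S * sgn_s y S * (A x $$ (a,k) * A y $$ (k,b)))"
      by (rule sum.swap)
    also have "\<dots> = (\<Sum>x<N. \<Sum>y<N. \<Sum>k<d. sgn_s x S * sgn_s y S * (A x $$ (a,k) * A y $$ (k,b)))"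
      by (rule sum.cong[OF refl], rule sum.swap)
    finally show ?thesis .
  qed
  also have "\<dots> = (\<Sum>x<N. \<Sum>y<N. sgn_s x S * sgn_s y S * (A x * A y) $$ (a,b))"
  proof (intro sum.cong refl)
    fix x y assume "x \<in> {..<N}" "y \<in> {..<N}"
    then have "(A x * A y) $$ (a,b) = (\<Sum>k<d. A x $$ (a,k) * A y $$ (k,b))"
      using assms by (intro index_mult_sum) auto
    then show "(\<Sum>k<d. sgn_s x S * sgn_s y S * (A x $$ (a,k) * A y $$ (k,b))) = sgn_s x S * sgn_s y S * (A x * A y) $$ (a,b)"
      by (simp add: sum_distrib_left)
  qed
  finally show ?thesis .
qed



lemma sum_Xsq_entry:
  assumes "\<And>x. x < N \<Longrightarrow> A x \<in> carrier_mat d d" "\<And>x. x < N \<Longrightarrow> A x * A x = 1\<^sub>m d" "a < d" "b < d"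
  shows "(\<Sum>S\<in>bob_strings N. (Xop N d A S * Xop N d A S) $$ (a,b)) =
     of_nat (2^(N-1) * N) * (if a = b then 1 else 0)"
proof -
  have "(\<Sum>S\<in>bob_strings N. (Xop N d A S * Xop N d A S) $$ (a,b)) =
     (\<Sum>S\<in>bob_strings N. \<Sum>x<N. \<Sum>y<N. sgn_s x S * sgn_s y S * (A x * A y) $$ (a,b))"
    using assms by (intro sum.cong refl Xop_sq_entry) auto
  also have "\<dots> = (\<Sum>x<N. \<Sum>S\<in>bob_strings N. \<Sum>y<N. sgn_s x S * sgn_s y S * (A x * A y) $$ (a,b))"
    by (rule sum.swap)
  also have "\<dots> = (\<Sum>x<N. \<Sum>y<N. \<Sum>S\<in>bob_strings N. sgn_s x S * sgn_s y S * (A x * A y) $$ (a,b))"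
    by (rule sum.cong[OF refl], rule sum.swap)
  also have "\<dots> = (\<Sum>x<N. \<Sum>y<N. (if x = y then 2 ^ (N - 1) else 0) * (A x * A y) $$ (a,b))"
  proof (intro sum.cong refl)
    fix x y assume "x \<in> {..<N}" "y \<in> {..<N}"
    then show "(\<Sum>S\<in>bob_strings N. sgn_s x S * sgn_s y S * (A x * A y) $$ (a,b)) =
       (if x = y then 2 ^ (N - 1) else 0) * (A x * A y) $$ (a,b)"
      using char_sum[of x N y] by (simp add: sum_distrib_right[symmetric])
  qed
  also have "\<dots> = (\<Sum>x<N. \<Sum>y<N. if x = y then 2 ^ (N - 1) * (A x * A y) $$ (a,b) else 0)"
    by (intro sum.cong refl) simp
  also have "\<dots> = (\<Sum>x<N. 2 ^ (N - 1) * (A x * A x) $$ (a,b))"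
    by (intro sum.cong refl) (simp add: sum.delta sum.delta')
  also have "\<dots> = (\<Sum>x<N. 2 ^ (N - 1) * (if a = b then 1 else 0))"
    using assms by (intro sum.cong refl) auto
  also have "\<dots> = of_nat (2^(N-1) * N) * (if a = b then 1 else 0)"
    by simp
  finally show ?thesis .
qed

lemma kron_smult_left:
  assumes "M \<in> carrier_mat n n" "K \<in> carrier_mat m m"
  shows "kron (c \<cdot>\<^sub>m M) K = c \<cdot>\<^sub>m kron M K"
  using assms divmod_lt by (intro eq_matI) auto

lemma upper_bound:
  assumes v: "valid_setup N dA dB \<rho> A B" and N: "N \<ge> 1" and eta: "0 \<le> \<eta>"
  shows "BN_Q N \<eta> \<rho> A B \<le> \<eta> * 2 ^ (N - 1) * sqrt N"
proof -
  have rho: "density_mat (dA*dB) \<rho>" and obsA: "\<And>x. x < N \<Longrightarrow> observable dA (A x)"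
    and obsB: "\<And>S. S \<in> bob_strings N \<Longrightarrow> observable dB (B S)"
    using v by (auto simp: valid_setup_def)
  have rc: "\<rho> \<in> carrier_mat (dA*dB) (dA*dB)" and tr: "mtrace \<rho> = 1"
    using rho by (auto simp: density_mat_def psd_mat_def hermitian_mat_def)
  have hA: "\<And>x. x < N \<Longrightarrow> hermitian_mat dA (A x)" and AA: "\<And>x. x < N \<Longrightarrow> A x * A x = 1\<^sub>m dA"
    using obsA by (auto simp: observable_def)
  have Ac: "\<And>x. x < N \<Longrightarrow> A x \<in> carrier_mat dA dA" using hA by (auto simp: hermitian_mat_def)
  have Bc: "\<And>S. S \<in> bob_strings N \<Longrightarrow> B S \<in> carrier_mat dB dB"
    using obsB by (auto simp: observable_def hermitian_mat_def)
  define t :: real where "t = sqrt N"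
  have t: "t > 0" using N by (simp add: t_def)
  let ?X = "Xop N dA A"
  let ?R = "\<lambda>S. Re (mtrace (\<rho> * kron (?X S * ?X S) (1\<^sub>m dB)))"
  have zS: "(\<Sum>x<N. (if x \<in> S then -1 else 1) * mtrace (\<rho> * kron (A x) (B S))) =
      mtrace (\<rho> * kron (?X S) (B S))" if "S \<in> bob_strings N" for S
  proof -
    have "(\<Sum>x<N. (if x \<in> S then -1 else 1) * mtrace (\<rho> * kron (A x) (B S))) =
       (\<Sum>x\<in>{..<N}. sgn_s x S * mtrace (\<rho> * kron (A x) (B S)))"
      by (simp add: sgn_s_def)
    also have "\<dots> = mtrace (\<rho> * kron (mat dA dA (\<lambda>(a,b). \<Sum>x\<in>{..<N}. sgn_s x S * A x $$ (a,b))) (B S))"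
      by (rule mtrace_kron_lin[OF rc]) (use Ac Bc that in auto)
    finally show ?thesis by (simp add: Xop_def)
  qed
  have each: "cmod (\<Sum>x<N. (if x \<in> S then -1 else 1) * mtrace (\<rho> * kron (A x) (B S))) \<le> ?R S / (2*t) + t/2"
    if "S \<in> bob_strings N" for S
    unfolding zS[OF that] by (rule cs_bound[OF rho Xop_herm[OF hA] obsB[OF that] t])
  have sumR: "(\<Sum>S\<in>bob_strings N. ?R S) = 2^(N-1) * N"
  proof -
    have "(\<Sum>S\<in>bob_strings N. mtrace (\<rho> * kron (?X S * ?X S) (1\<^sub>m dB))) =
       (\<Sum>S\<in>bob_strings N. 1 * mtrace (\<rho> * kron (?X S * ?X S) (1\<^sub>m dB)))" by simp
    also have "\<dots> = mtrace (\<rho> * kron (mat dA dA (\<lambda>(a,b). \<Sum>S\<in>bob_strings N. 1 * (?X S * ?X S) $$ (a,b))) (1\<^sub>m dB))"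
      by (rule mtrace_kron_lin[OF rc]) (auto intro: mult_carrier_mat Xop_carrier)
    also have "mat dA dA (\<lambda>(a,b). \<Sum>S\<in>bob_strings N. 1 * (?X S * ?X S) $$ (a,b)) =
        of_nat (2^(N-1) * N) \<cdot>\<^sub>m 1\<^sub>m dA"
      using sum_Xsq_entry[OF Ac AA] by (intro eq_matI) auto
    also have "kron (of_nat (2^(N-1) * N) \<cdot>\<^sub>m 1\<^sub>m dA) (1\<^sub>m dB) = of_nat (2^(N-1) * N) \<cdot>\<^sub>m 1\<^sub>m (dA*dB)"
      by (simp add: kron_smult_left[of _ dA _ dB] kron_one)
    also have "mtrace (\<rho> * (of_nat (2^(N-1) * N) \<cdot>\<^sub>m 1\<^sub>m (dA*dB))) = of_nat (2^(N-1) * N)"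
      using rc tr by (simp add: mtrace_smult)
    finally have "(\<Sum>S\<in>bob_strings N. mtrace (\<rho> * kron (?X S * ?X S) (1\<^sub>m dB))) = of_nat (2^(N-1) * N)" .
    then have "Re (\<Sum>S\<in>bob_strings N. mtrace (\<rho> * kron (?X S * ?X S) (1\<^sub>m dB))) = 2^(N-1) * N" by simp
    then show ?thesis by (simp add: Re_sum)
  qed
  have "(\<Sum>S\<in>bob_strings N. cmod (\<Sum>x<N. (if x \<in> S then -1 else 1) * mtrace (\<rho> * kron (A x) (B S))))
      \<le> (\<Sum>S\<in>bob_strings N. ?R S / (2*t) + t/2)"
    by (rule sum_mono) (rule each)
  also have "\<dots> = (\<Sum>S\<in>bob_strings N. ?R S) / (2*t) + 2^(N-1) * t / 2"
    by (simp add: sum.distrib sum_divide_distrib card_bob)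
  also have "\<dots> = 2^(N-1) * N / (2*t) + 2^(N-1) * t / 2" by (simp add: sumR)
  also have "\<dots> = 2^(N-1) * sqrt N"
  proof -
    have Nt: "real N = t * t" using t_def by simp
    have e: "real N / (2*t) = t / 2" using t unfolding Nt by (simp add: field_simps)
    have "2^(N-1) * real N / (2*t) + 2^(N-1) * t / 2 = 2^(N-1) * (real N / (2*t)) + 2^(N-1) * t / 2"
      by (simp only: times_divide_eq_right)
    also have "\<dots> = 2^(N-1) * t" unfolding e by simp
    finally show ?thesis by (simp add: t_def)
  qed
  finally have "(\<Sum>S\<in>bob_strings N. cmod (\<Sum>x<N. (if x \<in> S then -1 else 1) * mtrace (\<rho> * kron (A x) (B S))))
      \<le> 2^(N-1) * sqrt N" .
  from mult_left_mono[OF this eta] show ?thesis unfolding BN_Q_def by (simp add: mult.assoc)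
qed



definition realsym :: "nat \<Rightarrow> complex mat \<Rightarrow> bool" where
  "realsym d M \<longleftrightarrow> M \<in> carrier_mat d d \<and> (\<forall>i<d. \<forall>j<d. M $$ (i,j) = M $$ (j,i) \<and> cnj (M $$ (i,j)) = M $$ (i,j))"

lemma realsym_herm: "realsym d M \<Longrightarrow> hermitian_mat d M"
  unfolding realsym_def hermitian_mat_def by metis

lemma realsym_kron:
  assumes "realsym n X" "realsym m K"
  shows "realsym (n*m) (kron X K)"
proof -
  have c: "X \<in> carrier_mat n n" "K \<in> carrier_mat m m" using assms unfolding realsym_def by auto
  have "kron X K $$ (i, j) = kron X K $$ (j, i) \<and> cnj (kron X K $$ (i, j)) = kron X K $$ (i, j)" if "i < n*m" "j < n*m" for i j
  proof -
    have "X $$ (i div m, j div m) = X $$ (j div m, i div m)" "cnj (X $$ (i div m, j div m)) = X $$ (i div m, j div m)"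
      using assms(1) divmod_lt that unfolding realsym_def by blast+
    moreover have "K $$ (i mod m, j mod m) = K $$ (j mod m, i mod m)" "cnj (K $$ (i mod m, j mod m)) = K $$ (i mod m, j mod m)"
      using assms(2) divmod_lt that unfolding realsym_def by blast+
    ultimately show ?thesis using c that by simp
  qed
  then show ?thesis unfolding realsym_def using kron_carrier[OF c] by blast
qed

lemma realsym_one: "realsym n (1\<^sub>m n)" unfolding realsym_def by auto

definition sz :: "complex mat" where
  "sz = mat 2 2 (\<lambda>(i,j). if i = j then (if i = 0 then 1 else -1) else 0)"
definition sx :: "complex mat" where
  "sx = mat 2 2 (\<lambda>(i,j). if i = j then 0 else 1)"

lemma sz_c: "sz \<in> carrier_mat 2 2" by (simp add: sz_def)
lemma sx_c: "sx \<in> carrier_mat 2 2" by (simp add: sx_def)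

lemma less2: "(i::nat) < 2 \<longleftrightarrow> i = 0 \<or> i = 1" by auto

lemma sz_sq: "sz * sz = 1\<^sub>m 2"
  by (rule eq_matI) (auto simp: sz_def scalar_prod_def less2 numeral_2_eq_2)
lemma sx_sq: "sx * sx = 1\<^sub>m 2"
  by (rule eq_matI) (auto simp: sx_def scalar_prod_def less2 numeral_2_eq_2)
lemma szx: "sz * sx + sx * sz = 0\<^sub>m 2 2"
  by (rule eq_matI) (auto simp: sz_def sx_def scalar_prod_def less2 numeral_2_eq_2)
lemma sz_rs: "realsym 2 sz" unfolding realsym_def sz_def by (auto simp: less2)
lemma sx_rs: "realsym 2 sx" unfolding realsym_def sx_def by (auto simp: less2)

lemma kron_add_left:
  assumes "M1 \<in> carrier_mat n n" "M2 \<in> carrier_mat n n" "K \<in> carrier_mat m m"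
  shows "kron (M1 + M2) K = kron M1 K + kron M2 K"
  using assms divmod_lt by (intro eq_matI) (auto simp: algebra_simps)

lemma kron_add_right:
  assumes "M \<in> carrier_mat n n" "K1 \<in> carrier_mat m m" "K2 \<in> carrier_mat m m"
  shows "kron M (K1 + K2) = kron M K1 + kron M K2"
  using assms divmod_lt by (intro eq_matI) (auto simp: algebra_simps)

lemma kron_zero_left: "kron (0\<^sub>m n n) (K::complex mat) = 0\<^sub>m (n * dim_row K) (n * dim_col K)"
  using divmod_lt by (intro eq_matI) auto

lemma kron_zero_right: "kron (M::complex mat) (0\<^sub>m m m) = 0\<^sub>m (dim_row M * m) (dim_col M * m)"
  using divmod_lt by (intro eq_matI) auto

fun gam :: "nat \<Rightarrow> nat \<Rightarrow> complex mat" where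
  "gam 0 i = 1\<^sub>m 1"
| "gam (Suc k) i = (if i < k then kron sz (gam k i) else kron sx (1\<^sub>m (2^k)))"

lemma gam_props:
  "realsym (2^k) (gam k i) \<and> gam k i * gam k i = 1\<^sub>m (2^k)"
proof (induction k arbitrary: i)
  case 0 then show ?case by (simp add: realsym_one)
next
  case (Suc k)
  have G: "gam k i \<in> carrier_mat (2^k) (2^k)" using Suc.IH[of i] by (simp add: realsym_def)
  have 1: "1\<^sub>m (2^k) \<in> carrier_mat (2^k) (2^k)" by simp
  show ?case
  proof (cases "i < k")
    case True
    have "realsym (2 * 2^k) (kron sz (gam k i))" using realsym_kron[OF sz_rs] Suc.IH by blast
    moreover have "kron sz (gam k i) * kron sz (gam k i) = 1\<^sub>m (2 * 2^k)"
      using kron_mult[OF sz_c sz_c G G] Suc.IH[of i] sz_sq kron_one by simp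
    ultimately show ?thesis using True by simp
  next
    case False
    have "realsym (2 * 2^k) (kron sx (1\<^sub>m (2^k)))" using realsym_kron[OF sx_rs realsym_one] by blast
    moreover have "kron sx (1\<^sub>m (2^k)) * kron sx (1\<^sub>m (2^k)) = 1\<^sub>m (2 * 2^k)"
      using kron_mult[OF sx_c sx_c 1 1] sx_sq kron_one by simp
    ultimately show ?thesis using False by simp
  qed
qed

lemma gam_c: "gam k i \<in> carrier_mat (2^k) (2^k)"
  using gam_props[of k i] by (simp add: realsym_def)

lemma gam_anti:
  "i < k \<Longrightarrow> j < k \<Longrightarrow> i \<noteq> j \<Longrightarrow> gam k i * gam k j + gam k j * gam k i = 0\<^sub>m (2^k) (2^k)"
proof (induction k arbitrary: i j)
  case 0 then show ?case by simp
next
  case (Suc k)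
  have 1: "1\<^sub>m (2^k) \<in> carrier_mat (2^k) (2^k)" by simp
  have mixed: "kron sz (gam k l) * kron sx (1\<^sub>m (2^k)) + kron sx (1\<^sub>m (2^k)) * kron sz (gam k l) = 0\<^sub>m (2^Suc k) (2^Suc k)" for l
  proof -
    have "kron sz (gam k l) * kron sx (1\<^sub>m (2^k)) + kron sx (1\<^sub>m (2^k)) * kron sz (gam k l)
       = kron (sz * sx) (gam k l) + kron (sx * sz) (gam k l)"
      using kron_mult[OF sz_c sx_c gam_c 1] kron_mult[OF sx_c sz_c 1 gam_c] carrier_matD[OF gam_c[of k l]] by simp
    also have "\<dots> = kron (sz * sx + sx * sz) (gam k l)"
      by (rule kron_add_left[symmetric, of _ 2 _ _ "2^k"]) (auto intro: gam_c mult_carrier_mat sz_c sx_c)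
    also have "\<dots> = 0\<^sub>m (2^Suc k) (2^Suc k)" unfolding szx using kron_zero_left[of 2 "gam k l"] gam_c[of k l] by simp
    finally show ?thesis .
  qed
  show ?case
  proof (cases "i < k \<and> j < k")
    case True
    have "gam (Suc k) i * gam (Suc k) j + gam (Suc k) j * gam (Suc k) i
       = kron (sz * sz) (gam k i * gam k j) + kron (sz * sz) (gam k j * gam k i)"
      using True kron_mult[OF sz_c sz_c gam_c gam_c] by simp
    also have "\<dots> = kron (1\<^sub>m 2) (gam k i * gam k j + gam k j * gam k i)"
      unfolding sz_sq by (rule kron_add_right[symmetric, of _ 2 _ "2^k"]) (auto intro: gam_c mult_carrier_mat)
    also have "\<dots> = 0\<^sub>m (2^Suc k) (2^Suc k)" using Suc.IH[of i j] True Suc.prems kron_zero_right[of "1\<^sub>m 2" "2^k"] by simp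
    finally show ?thesis .
  next
    case False
    then have "(i < k \<and> j = k) \<or> (j < k \<and> i = k)" using Suc.prems by auto
    then show ?thesis
    proof
      assume "i < k \<and> j = k" then show ?thesis using mixed[of i] by simp
    next
      assume a: "j < k \<and> i = k"
      have c1: "kron sz (gam k j) * kron sx (1\<^sub>m (2^k)) \<in> carrier_mat (2*2^k) (2*2^k)"
        using kron_carrier[OF sz_c gam_c] kron_carrier[OF sx_c 1] by (intro mult_carrier_mat) auto
      have c2: "kron sx (1\<^sub>m (2^k)) * kron sz (gam k j) \<in> carrier_mat (2*2^k) (2*2^k)"
        using kron_carrier[OF sz_c gam_c] kron_carrier[OF sx_c 1] by (intro mult_carrier_mat) auto
      show ?thesis using a mixed[of j] comm_add_mat[OF c1 c2] by simp
    qed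
  qed
qed



lemma sym_sum:
  fixes f :: "nat \<Rightarrow> nat \<Rightarrow> complex"
  assumes "finite I" "\<And>x y. x \<in> I \<Longrightarrow> y \<in> I \<Longrightarrow> f x y + f y x = (if x = y then 2 * g x else 0)"
  shows "(\<Sum>x\<in>I. \<Sum>y\<in>I. f x y) = (\<Sum>x\<in>I. g x)"
proof -
  have "2 * (\<Sum>x\<in>I. \<Sum>y\<in>I. f x y) = (\<Sum>x\<in>I. \<Sum>y\<in>I. f x y) + (\<Sum>y\<in>I. \<Sum>x\<in>I. f x y)"
    by (simp add: sum.swap[of f I I])
  also have "\<dots> = (\<Sum>x\<in>I. \<Sum>y\<in>I. f x y + f y x)"
    by (simp add: sum.distrib)
  also have "\<dots> = (\<Sum>x\<in>I. \<Sum>y\<in>I. if x = y then 2 * g x else 0)"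
    using assms by (intro sum.cong refl) auto
  also have "\<dots> = (\<Sum>x\<in>I. 2 * g x)"
    using assms(1) by (intro sum.cong refl) (simp add: sum.delta)
  finally show ?thesis by (simp add: sum_distrib_left[symmetric])
qed

lemma Xop_sq:
  assumes c: "\<And>x. x < N \<Longrightarrow> A x \<in> carrier_mat d d" and sq: "\<And>x. x < N \<Longrightarrow> A x * A x = 1\<^sub>m d"
    and anti: "\<And>x y. x < N \<Longrightarrow> y < N \<Longrightarrow> x \<noteq> y \<Longrightarrow> A x * A y + A y * A x = 0\<^sub>m d d"
  shows "Xop N d A S * Xop N d A S = of_nat N \<cdot>\<^sub>m 1\<^sub>m d"
proof (rule eq_matI)
  fix a b assume "a < dim_row (of_nat N \<cdot>\<^sub>m 1\<^sub>m d :: complex mat)" "b < dim_col (of_nat N \<cdot>\<^sub>m 1\<^sub>m d :: complex mat)"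
  then have a: "a < d" and b: "b < d" by auto
  have "(Xop N d A S * Xop N d A S) $$ (a,b) = (\<Sum>x<N. \<Sum>y<N. sgn_s x S * sgn_s y S * (A x * A y) $$ (a,b))"
    by (rule Xop_sq_entry[OF c a b])
  also have "\<dots> = (\<Sum>x<N. (if a = b then 1 else 0))"
  proof (rule sym_sum, simp)
    fix x y assume x: "x \<in> {..<N}" and y: "y \<in> {..<N}"
    show "sgn_s x S * sgn_s y S * (A x * A y) $$ (a, b) + sgn_s y S * sgn_s x S * (A y * A x) $$ (a, b) =
         (if x = y then 2 * (if a = b then 1 else 0) else 0)"
    proof (cases "x = y")
      case True
      then show ?thesis using sq[of x] x a b by (simp add: sgn_s_def)
    next
      case False
      have "(A x * A y) $$ (a,b) + (A y * A x) $$ (a,b) = (A x * A y + A y * A x) $$ (a,b)"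
        using carrier_matD[OF c[of x]] carrier_matD[OF c[of y]] x y a b by simp
      also have "\<dots> = 0" using anti[of x y] False x y a b by simp
      finally have z: "(A x * A y) $$ (a,b) + (A y * A x) $$ (a,b) = 0" .
      have "sgn_s x S * sgn_s y S * (A x * A y) $$ (a, b) + sgn_s y S * sgn_s x S * (A y * A x) $$ (a, b)
          = sgn_s x S * sgn_s y S * ((A x * A y) $$ (a,b) + (A y * A x) $$ (a,b))" by (simp add: algebra_simps)
      then show ?thesis using z False by simp
    qed
  qed
  also have "\<dots> = (of_nat N \<cdot>\<^sub>m 1\<^sub>m d) $$ (a,b)" using a b by simp
  finally show "(Xop N d A S * Xop N d A S) $$ (a,b) = (of_nat N \<cdot>\<^sub>m 1\<^sub>m d) $$ (a,b)" .
qed (auto simp: Xop_def)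

lemma Xop_sym:
  assumes "\<And>x. x < N \<Longrightarrow> realsym d (A x)" "a < d" "b < d"
  shows "Xop N d A S $$ (a,b) = Xop N d A S $$ (b,a)"
proof -
  have "\<And>x. x < N \<Longrightarrow> A x $$ (a,b) = A x $$ (b,a)" using assms unfolding realsym_def by blast
  then show ?thesis using assms(2,3) by (simp add: Xop_def)
qed

lemma sum_single:
  fixes f :: "nat \<Rightarrow> 'a::comm_monoid_add"
  assumes "a \<in> {..<n}" "\<And>b. b \<in> {..<n} \<Longrightarrow> b \<noteq> a \<Longrightarrow> f b = 0"
  shows "(\<Sum>b<n. f b) = f a"
proof -
  have "(\<Sum>b<n. f b) = f a + (\<Sum>b\<in>{..<n} - {a}. f b)"
    using assms(1) by (simp add: sum.remove)
  also have "(\<Sum>b\<in>{..<n} - {a}. f b) = 0" using assms(2) by (intro sum.neutral) auto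
  finally show ?thesis by simp
qed

definition rhom :: "nat \<Rightarrow> complex mat" where
  "rhom d = mat (d*d) (d*d) (\<lambda>(i,j). if i div d = i mod d \<and> j div d = j mod d then 1 / of_nat d else 0)"

lemma rhom_density:
  assumes d: "d > 0"
  shows "density_mat (d*d) (rhom d)"
proof -
  let ?\<phi> = "\<lambda>i. if i div d = i mod d then (1::complex) else 0"
  have ent: "rhom d $$ (i,j) = (1 / of_nat d) * (?\<phi> i * ?\<phi> j)" if "i < d*d" "j < d*d" for i j
    using that by (simp add: rhom_def)
  have herm: "hermitian_mat (d*d) (rhom d)"
    unfolding hermitian_mat_def by (auto simp: rhom_def)
  have pos: "0 \<le> Re (\<Sum>i<d*d. \<Sum>j<d*d. cnj (v $ i) * rhom d $$ (i, j) * v $ j)" for v :: "complex vec"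
  proof -
    define w where "w = (\<Sum>j<d*d. ?\<phi> j * v $ j)"
    have "(\<Sum>i<d*d. \<Sum>j<d*d. cnj (v $ i) * rhom d $$ (i, j) * v $ j) =
        (\<Sum>i<d*d. \<Sum>j<d*d. (1 / of_nat d) * ((?\<phi> i * cnj (v $ i)) * (?\<phi> j * v $ j)))"
      by (intro sum.cong refl) (simp add: ent mult_ac)
    also have "\<dots> = (1 / of_nat d) * ((\<Sum>i<d*d. ?\<phi> i * cnj (v $ i)) * w)"
      unfolding w_def sum_product by (simp only: sum_distrib_left)
    also have "(\<Sum>i<d*d. ?\<phi> i * cnj (v $ i)) = cnj w"
      unfolding w_def cnj_sum by (intro sum.cong refl) simp
    finally have e: "(\<Sum>i<d*d. \<Sum>j<d*d. cnj (v $ i) * rhom d $$ (i, j) * v $ j) = (1 / of_nat d) * (cnj w * w)" .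
    have "cnj w * w = of_real ((cmod w)^2)" by (metis complex_norm_square mult.commute)
    then show ?thesis unfolding e by simp
  qed
  have tr: "mtrace (rhom d) = 1"
  proof -
    have "mtrace (rhom d) = (\<Sum>i<d*d. (if i div d = i mod d then 1 / of_nat d else 0))"
      unfolding mtrace_def by (simp add: rhom_def)
    also have "\<dots> = (\<Sum>a<d. \<Sum>b<d. (if a = b then 1 / of_nat d else 0))"
      by (rule sum_pair_idx'[where f = "\<lambda>a b. if a = b then 1 / of_nat d else (0::complex)"])
    also have "\<dots> = (\<Sum>a<d. 1 / of_nat d)" by (intro sum.cong refl) (simp add: sum.delta)
    also have "\<dots> = 1" using d by simp
    finally show ?thesis .
  qed
  show ?thesis unfolding density_mat_def psd_mat_def using herm pos tr by blast
qed

lemma rhom_trace: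
  assumes X: "X \<in> carrier_mat d d" and Y: "Y \<in> carrier_mat d d"
  shows "mtrace (rhom d * kron X Y) = (1 / of_nat d) * (\<Sum>a<d. \<Sum>a'<d. X $$ (a',a) * Y $$ (a',a))"
proof -
  have rc: "rhom d \<in> carrier_mat (d*d) (d*d)" by (simp add: rhom_def)
  define F where "F = (\<lambda>a b a' b'. (if a = b \<and> a' = b' then 1 / of_nat d else 0) *
            (X $$ (a', a) * Y $$ (b', b)))"
  have "mtrace (rhom d * kron X Y) = (\<Sum>i<d*d. \<Sum>j<d*d. rhom d $$ (i,j) *
            (X $$ (j div d, i div d) * Y $$ (j mod d, i mod d)))"
    by (rule mtrace_kron[OF rc X Y])
  also have "\<dots> = (\<Sum>i<d*d. \<Sum>j<d*d. F (i div d) (i mod d) (j div d) (j mod d))"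
    unfolding F_def by (intro sum.cong refl) (simp add: rhom_def)
  also have "\<dots> = (\<Sum>a<d. \<Sum>b<d. \<Sum>j<d*d. F a b (j div d) (j mod d))"
    by (rule sum_pair_idx'[of "\<lambda>a b. \<Sum>j<d*d. F a b (j div d) (j mod d)"])
  also have "\<dots> = (\<Sum>a<d. \<Sum>b<d. \<Sum>a'<d. \<Sum>b'<d. F a b a' b')"
    by (rule sum.cong[OF refl], rule sum.cong[OF refl], rule sum_pair_idx')
  also have "\<dots> = (\<Sum>a<d. \<Sum>b<d. \<Sum>a'<d. \<Sum>b'<d. (if a = b \<and> a' = b' then 1 / of_nat d else 0) *
            (X $$ (a', a) * Y $$ (b', b)))" unfolding F_def ..
  also have "\<dots> = (\<Sum>a<d. \<Sum>a'<d. (1 / of_nat d) * (X $$ (a', a) * Y $$ (a', a)))"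
  proof (rule sum.cong[OF refl])
    fix a assume a: "a \<in> {..<d}"
    have "(\<Sum>b<d. \<Sum>a'<d. \<Sum>b'<d. (if a = b \<and> a' = b' then 1 / of_nat d else 0) * (X $$ (a', a) * Y $$ (b', b)))
       = (\<Sum>a'<d. \<Sum>b'<d. (if a = a \<and> a' = b' then 1 / of_nat d else 0) * (X $$ (a', a) * Y $$ (b', a)))"
      by (rule sum_single[OF a]) auto
    also have "\<dots> = (\<Sum>a'<d. (1 / of_nat d) * (X $$ (a', a) * Y $$ (a', a)))"
    proof (rule sum.cong[OF refl])
      fix a' assume a': "a' \<in> {..<d}"
      show "(\<Sum>b'<d. (if a = a \<and> a' = b' then 1 / of_nat d else 0) * (X $$ (a', a) * Y $$ (b', a))) =
          (1 / of_nat d) * (X $$ (a', a) * Y $$ (a', a))"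
        by (subst sum_single[OF a']) auto
    qed
    finally show "(\<Sum>b<d. \<Sum>a'<d. \<Sum>b'<d. (if a = b \<and> a' = b' then 1 / of_nat d else 0) * (X $$ (a', a) * Y $$ (b', b)))
       = (\<Sum>a'<d. (1 / of_nat d) * (X $$ (a', a) * Y $$ (a', a)))" .
  qed
  finally show ?thesis by (simp add: sum_distrib_left)
qed



lemma construction:
  assumes N: "N \<ge> 1" and eta: "0 \<le> \<eta>"
  shows "\<exists>dA dB \<rho> A B. valid_setup N dA dB \<rho> A B \<and>
           (\<forall>x<N. \<forall>x'<N. A x * A x' + A x' * A x =
               (if x = x' then 2 \<cdot>\<^sub>m 1\<^sub>m dA else 0\<^sub>m dA dA)) \<and>
           BN_Q N \<eta> \<rho> A B = \<eta> * 2 ^ (N - 1) * sqrt N"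
proof -
  define d :: nat where "d = 2^N"
  have d0: "d > 0" unfolding d_def by simp
  define A where "A = gam N"
  define c :: complex where "c = of_real (1 / sqrt N)"
  define B where "B S = c \<cdot>\<^sub>m Xop N d A S" for S
  define \<rho> where "\<rho> = rhom d"
  have rsA: "\<And>x. realsym d (A x)" and AA: "\<And>x. A x * A x = 1\<^sub>m d"
    unfolding A_def d_def using gam_props by auto
  have Ac: "\<And>x. A x \<in> carrier_mat d d" using rsA by (simp add: realsym_def)
  have hA: "\<And>x. hermitian_mat d (A x)" using rsA by (simp add: realsym_herm)
  have anti: "\<And>x y. x < N \<Longrightarrow> y < N \<Longrightarrow> x \<noteq> y \<Longrightarrow> A x * A y + A y * A x = 0\<^sub>m d d"
    unfolding A_def d_def by (rule gam_anti)
  have XX: "\<And>S. Xop N d A S * Xop N d A S = of_nat N \<cdot>\<^sub>m 1\<^sub>m d"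
    by (rule Xop_sq) (use Ac AA anti in auto)
  have hX: "\<And>S. hermitian_mat d (Xop N d A S)" by (rule Xop_herm) (use hA in auto)
  have Xc: "\<And>S. Xop N d A S \<in> carrier_mat d d" by (rule Xop_carrier)
  have cc: "c * c * of_nat N = 1"
    unfolding c_def using N by (simp add: of_real_mult[symmetric] del: of_real_mult)
  have BB: "B S * B S = 1\<^sub>m d" for S
  proof -
    have "B S * B S = c \<cdot>\<^sub>m (Xop N d A S * (c \<cdot>\<^sub>m Xop N d A S))"
      unfolding B_def by (rule mult_smult_assoc_mat[OF Xc smult_carrier_mat[OF Xc]])
    also have "Xop N d A S * (c \<cdot>\<^sub>m Xop N d A S) = c \<cdot>\<^sub>m (Xop N d A S * Xop N d A S)"
      by (rule mult_smult_distrib[OF Xc Xc])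
    also have "c \<cdot>\<^sub>m (c \<cdot>\<^sub>m (Xop N d A S * Xop N d A S)) = 1\<^sub>m d"
      unfolding XX using cc by (intro eq_matI) (auto simp: mult.assoc)
    finally show ?thesis .
  qed
  have obsB: "observable d (B S)" for S
    unfolding observable_def B_def[symmetric] using BB
    by (simp add: B_def herm_smult[OF hX] c_def)
  have obsA: "observable d (A x)" for x
    unfolding observable_def using hA AA by simp
  have valid: "valid_setup N d d \<rho> A B"
    unfolding valid_setup_def \<rho>_def using rhom_density[OF d0] obsA obsB by blast
  have ac: "A x * A x' + A x' * A x = (if x = x' then 2 \<cdot>\<^sub>m 1\<^sub>m d else 0\<^sub>m d d)" if "x < N" "x' < N" for x x'
  proof (cases "x = x'")
    case True
    have "1\<^sub>m d + 1\<^sub>m d = (2 \<cdot>\<^sub>m 1\<^sub>m d :: complex mat)" by (intro eq_matI) auto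
    then show ?thesis using True AA by simp
  next
    case False then show ?thesis using anti that by simp
  qed
  have rc: "\<rho> \<in> carrier_mat (d*d) (d*d)" by (simp add: \<rho>_def rhom_def)
  have Bc: "\<And>S. B S \<in> carrier_mat d d" unfolding B_def using Xc by simp
  have termS: "(\<Sum>x<N. (if x \<in> S then -1 else 1) * mtrace (\<rho> * kron (A x) (B S))) = of_real (sqrt N)" for S
  proof -
    let ?X = "Xop N d A S"
    have "(\<Sum>x<N. (if x \<in> S then -1 else 1) * mtrace (\<rho> * kron (A x) (B S))) =
       (\<Sum>x\<in>{..<N}. sgn_s x S * mtrace (\<rho> * kron (A x) (B S)))"
      by (simp add: sgn_s_def)
    also have "\<dots> = mtrace (\<rho> * kron (mat d d (\<lambda>(a,b). \<Sum>x\<in>{..<N}. sgn_s x S * A x $$ (a,b))) (B S))"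
      by (rule mtrace_kron_lin[OF rc]) (use Ac Bc in auto)
    also have "\<dots> = mtrace (\<rho> * kron ?X (B S))" by (simp add: Xop_def)
    also have "\<dots> = (1 / of_nat d) * (\<Sum>a<d. \<Sum>a'<d. ?X $$ (a',a) * B S $$ (a',a))"
      unfolding \<rho>_def by (rule rhom_trace[OF Xc Bc])
    also have "\<dots> = (1 / of_nat d) * (\<Sum>a<d. c * (\<Sum>a'<d. ?X $$ (a,a') * ?X $$ (a',a)))"
    proof -
      have h: "?X $$ (a',a) * B S $$ (a',a) = c * (?X $$ (a,a') * ?X $$ (a',a))" if "a < d" "a' < d" for a a'
      proof -
        have "?X $$ (a',a) = ?X $$ (a,a')" by (rule Xop_sym) (use rsA that in auto)
        then show ?thesis using that carrier_matD[OF Xc[of S]] by (simp add: B_def)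
      qed
      have "(\<Sum>a<d. \<Sum>a'<d. ?X $$ (a',a) * B S $$ (a',a)) = (\<Sum>a<d. \<Sum>a'<d. c * (?X $$ (a,a') * ?X $$ (a',a)))"
        by (rule sum.cong[OF refl], rule sum.cong[OF refl], rule h) auto
      then show ?thesis by (simp only: sum_distrib_left)
    qed
    also have "\<dots> = (1 / of_nat d) * (\<Sum>a<d. c * (?X * ?X) $$ (a,a))"
      using index_mult_sum[OF Xc Xc] by simp
    also have "\<dots> = (1 / of_nat d) * (\<Sum>a<d. c * of_nat N)"
      unfolding XX by simp
    also have "\<dots> = c * of_nat N" using d0 by simp
    also have "\<dots> = of_real (sqrt N)"
    proof -
      have sp: "sqrt (real N) > 0" using N by simp
      have ss: "real N = sqrt (real N) * sqrt (real N)" by simp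
      have e: "(1 / sqrt (real N)) * real N = sqrt N" using sp by (subst ss) (simp add: field_simps)
      have "c * of_nat N = of_real ((1 / sqrt (real N)) * real N)" unfolding c_def by simp
      then show ?thesis unfolding e .
    qed
    finally show ?thesis .
  qed
  have "BN_Q N \<eta> \<rho> A B = \<eta> * (\<Sum>S\<in>bob_strings N. sqrt N)"
    unfolding BN_Q_def termS by simp
  also have "\<dots> = \<eta> * 2 ^ (N - 1) * sqrt N" by (simp add: card_bob)
  finally show ?thesis using valid ac by blast
qed


theorem mainTheorem5:
  fixes N :: nat and \<eta> :: real
  assumes "N \<ge> 1" and "0 \<le> \<eta>" and "\<eta> \<le> 1"
  shows "Sup {BN_Q N \<eta> \<rho> A B | dA dB \<rho> A B. valid_setup N dA dB \<rho> A B}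
           = \<eta> * 2 ^ (N - 1) * sqrt N
       \<and> (\<exists>dA dB \<rho> A B. valid_setup N dA dB \<rho> A B \<and>
           (\<forall>x<N. \<forall>x'<N. A x * A x' + A x' * A x =
               (if x = x' then 2 \<cdot>\<^sub>m 1\<^sub>m dA else 0\<^sub>m dA dA)) \<and>
           BN_Q N \<eta> \<rho> A B = \<eta> * 2 ^ (N - 1) * sqrt N)"
proof -
  have ex: "\<exists>dA dB \<rho> A B. valid_setup N dA dB \<rho> A B \<and>
           (\<forall>x<N. \<forall>x'<N. A x * A x' + A x' * A x =
               (if x = x' then 2 \<cdot>\<^sub>m 1\<^sub>m dA else 0\<^sub>m dA dA)) \<and>
           BN_Q N \<eta> \<rho> A B = \<eta> * 2 ^ (N - 1) * sqrt N"
    by (rule construction) (use assms in auto)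
  have mem: "\<eta> * 2 ^ (N - 1) * sqrt N \<in> {BN_Q N \<eta> \<rho> A B | dA dB \<rho> A B. valid_setup N dA dB \<rho> A B}"
    using ex by fastforce
  have ub: "x \<le> \<eta> * 2 ^ (N - 1) * sqrt N"
    if "x \<in> {BN_Q N \<eta> \<rho> A B | dA dB \<rho> A B. valid_setup N dA dB \<rho> A B}" for x
    using that upper_bound assms by blast
  show ?thesis using cSup_eq_maximum[OF mem ub] ex by blast
qed

end
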